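(* The map $\eta:\mathbf{T}_b\to\mathbf{F}$ is a bijection, and for all $t_1,t_2\in\mathbf{T}_b$: $t_1\leq t_2$ in the Tamari order if and only if $\eta(t_1)\leq\eta(t_2)$ in $\mathbf{F}$. In other words, $\eta$ is a poset isomorphism.
   Context: $\mathbf{T}_b$ is the set of planar binary trees, defined recursively: the single leaf $|$ is a planar binary tree, and if $t_1,t_2$ are planar binary trees then so is $t_1\vee t_2$ (grafting $t_1,t_2$ as left and right subtrees on a new root). The Tamari order $\leq$ on $\mathbf{T}_b$ is the reflexive-transitive closure of the relation $t\to t'$, where $t'$ is obtained from $t$ by replacing one subtree of the form $(a\vee b)\vee c$ by $a\vee(b\vee c)$. Planar rooted trees have their children linearly ordered left to right; $\mathbf{F}$ is the set of planar forests (finite, possibly empty, sequences $t_1\cdots t_n$ of planar rooted trees; $1$ = empty forest; product = concatenation). $B^+(F)$ is the tree obtained by grafting the trees of $F$ (in order) on a new common root. $\eta$ is defined recursively by $\eta(|)=1$, $\eta(t_1\vee t_2)=B^+(\eta(t_1))\,\eta(t_2)$. Order on $\mathbf{F}$: on vertices, $s\geq_{high}s'$ iff $s'=s$ or $s'$ is an ancestor of $s$; for $\geq_{high}$-incomparable $s,s'$, $s\geq_{left}s'$ iff $s\in t_i,s'\in t_j$ with $i<j$, or both lie in $t_i$ and $s\geq_{left}s'$ in the forest obtained from $t_i$ by deleting its root (recursively). An admissible transformation of a forest: choose a vertex $s$ which is the leftmost child of its parent $u$; if $u$ is not a root, with parent $r$, move the subtree rooted at $s$ to become a child of $r$ immediately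 to the left of $u$; if $u$ is a root, move the subtree rooted at $s$ to become a new tree immediately to the left of the tree of $u$; everything else unchanged. $F\leq G$ iff $G$ is obtained from $F$ by a finite (possibly empty) sequence of admissible transformations. *)

theory Defs
  imports Main
begin

text \<open>Planar binary trees: Leaf is the single leaf, Join t1 t2 is t1 \<or> t2.\<close>
datatype btree = Leaf | Join btree btree

inductive tam_step :: "btree \<Rightarrow> btree \<Rightarrow> bool" where
  rot: "tam_step (Join (Join a b) c) (Join a (Join b c))"
| left: "tam_step t t' \<Longrightarrow> tam_step (Join t u) (Join t' u)"
| right: "tam_step u u' \<Longrightarrow> tam_step (Join t u) (Join t u')"

definition tamari_le :: "btree \<Rightarrow> btree \<Rightarrow> bool" where
  "tamari_le = tam_step\<^sup>*\<^sup>*"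

datatype ptree = Node "ptree list"

type_synonym forest = "ptree list"

definition Bplus :: "forest \<Rightarrow> ptree" where
  "Bplus F = Node F"

fun eta :: "btree \<Rightarrow> forest" where
  "eta Leaf = []"
| "eta (Join t1 t2) = Bplus (eta t1) # eta t2"

text \<open>Root case: s is the leftmost child of a root u,
  and s's subtree becomes a new tree just left of u's tree. Non-root case:
  the same operation applied to the children list of the parent r of u
  (at any depth).\<close>
inductive adm_step :: "forest \<Rightarrow> forest \<Rightarrow> bool" where
  root: "adm_step (F1 @ [Node (s # cs)] @ F2) (F1 @ [s, Node cs] @ F2)"
| inner: "adm_step F G \<Longrightarrow> adm_step (F1 @ [Node F] @ F2) (F1 @ [Node G] @ F2)"

definition forest_le :: "forest \<Rightarrow> forest \<Rightarrow> bool" where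
  "forest_le = adm_step\<^sup>*\<^sup>*"

end

theory Submission
  imports Defs
begin

fun inv_eta :: "forest \<Rightarrow> btree" where
  "inv_eta [] = Leaf"
| "inv_eta (Node F # G) = Join (inv_eta F) (inv_eta G)"

lemma inv_eta_eta[simp]: "inv_eta (eta t) = t"
  by (induction t) (auto simp: Bplus_def)

lemma eta_inv_eta[simp]: "eta (inv_eta F) = F"
  by (induction F rule: inv_eta.induct) (auto simp: Bplus_def)

lemma adm_cons: "adm_step F G \<Longrightarrow> adm_step (x # F) (x # G)"
proof (induction rule: adm_step.induct)
  case (root F1 s cs F2)
  then show ?case using adm_step.root[of "x#F1" s cs F2] by simp
next
  case (inner F G F1 F2)
  then show ?case using adm_step.inner[of F G "x#F1" F2] by simp
qed

lemma tam_adm: "tam_step t t' \<Longrightarrow> adm_step (eta t) (eta t')"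
proof (induction rule: tam_step.induct)
  case (rot a b c)
  then show ?case using adm_step.root[of "[]" "Node (eta a)" "eta b" "eta c"]
    by (simp add: Bplus_def)
next
  case (left t t' u)
  then show ?case using adm_step.inner[of "eta t" "eta t'" "[]" "eta u"]
    by (simp add: Bplus_def)
next
  case (right u u' t)
  then show ?case by (simp add: adm_cons)
qed

lemma inv_app: "tam_step (inv_eta X) (inv_eta Y) \<Longrightarrow> tam_step (inv_eta (F1 @ X)) (inv_eta (F1 @ Y))"
proof (induction F1)
  case Nil then show ?case by simp
next
  case (Cons a F1)
  then show ?case by (cases a) (auto intro: tam_step.right)
qed

lemma adm_tam: "adm_step F G \<Longrightarrow> tam_step (inv_eta F) (inv_eta G)"
proof (induction rule: adm_step.induct)
  case (root F1 s cs F2)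
  obtain S where s: "s = Node S" by (cases s)
  show ?case using inv_app[of "[Node (s # cs)] @ F2" "[s, Node cs] @ F2" F1]
    by (simp add: s tam_step.rot)
next
  case (inner F G F1 F2)
  then show ?case using inv_app[of "[Node F] @ F2" "[Node G] @ F2" F1]
    by (simp add: tam_step.left)
qed

theorem theorem31:
  shows "bij eta \<and> (\<forall>t1 t2. tamari_le t1 t2 \<longleftrightarrow> forest_le (eta t1) (eta t2))"
proof
  show "bij eta"
    by (rule bijI) (metis inv_eta_eta injI, metis eta_inv_eta surjI)
next
  have A: "tamari_le t1 t2 \<Longrightarrow> forest_le (eta t1) (eta t2)" for t1 t2
    unfolding tamari_le_def forest_le_def
    by (induction rule: rtranclp_induct) (auto intro: rtranclp.rtrancl_into_rtrancl tam_adm)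
  have B: "forest_le F G \<Longrightarrow> tamari_le (inv_eta F) (inv_eta G)" for F G
    unfolding tamari_le_def forest_le_def
    by (induction rule: rtranclp_induct) (auto intro: rtranclp.rtrancl_into_rtrancl adm_tam)
  show "\<forall>t1 t2. tamari_le t1 t2 \<longleftrightarrow> forest_le (eta t1) (eta t2)"
    using A B by (metis inv_eta_eta)
qed

end
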